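(* Let $R$ be a semiprime left Goldie ring. Then $\mathcal{C}_R\cap\mathrm{ass}_R(S)=\emptyset$ for every Ore set $S$ of $R$.
   Context: Rings are associative with $1$. $\mathcal{C}_R$ is the set of regular elements (non-zero-divisors on both sides) of $R$. A multiplicative set satisfies $SS\subseteq S$, $1\in S$, $0\notin S$; an Ore set additionally satisfies $Sr\cap Rs\ne\emptyset$ and $rS\cap sR\neq\emptyset$ for all $r\in R,s\in S$. $\mathrm{ass}_R(S)$ is the kernel of $R\to R\langle S^{-1}\rangle$, where $R\langle S^{-1}\rangle=R\langle X_S\rangle/I_S$, $R\langle X_S\rangle$ is freely generated by $R$ and noncommuting indeterminates $x_s$ ($s\in S$) and $I_S$ is generated by $sx_s-1,x_ss-1$. (For an Ore set, $\mathrm{ass}_R(S)=\{r: srt=0\text{ for some } s,t\in S\}$.) *)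

theory Defs
  imports Main
begin

definition regular_elems :: "'a::ring_1 set" where
  "regular_elems = {c. (\<forall>x. c * x = 0 \<longrightarrow> x = 0) \<and> (\<forall>x. x * c = 0 \<longrightarrow> x = 0)}"

definition multiplicative_set :: "'a::ring_1 set \<Rightarrow> bool" where
  "multiplicative_set S \<longleftrightarrow> (\<forall>s\<in>S. \<forall>t\<in>S. s * t \<in> S) \<and> 1 \<in> S \<and> 0 \<notin> S"

definition ore_set :: "'a::ring_1 set \<Rightarrow> bool" where
  "ore_set S \<longleftrightarrow> multiplicative_set S \<and>
     (\<forall>r. \<forall>s\<in>S. (\<exists>s'\<in>S. \<exists>r'. s' * r = r' * s) \<and> (\<exists>s'\<in>S. \<exists>r'. r * s' = s * r'))"

text \<open>For an Ore set S, the kernel of R \<rightarrow> R<S^-1> is {r. s r t = 0 for some s,t in S}.\<close>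
definition ass :: "'a::ring_1 set \<Rightarrow> 'a set" where
  "ass S = {r. \<exists>s\<in>S. \<exists>t\<in>S. s * r * t = 0}"

definition left_ideal :: "'a::ring_1 set \<Rightarrow> bool" where
  "left_ideal L \<longleftrightarrow> 0 \<in> L \<and> (\<forall>x\<in>L. \<forall>y\<in>L. x + y \<in> L) \<and> (\<forall>x\<in>L. - x \<in> L)
     \<and> (\<forall>r. \<forall>x\<in>L. r * x \<in> L)"

definition two_sided_ideal :: "'a::ring_1 set \<Rightarrow> bool" where
  "two_sided_ideal I \<longleftrightarrow> left_ideal I \<and> (\<forall>r. \<forall>x\<in>I. x * r \<in> I)"

definition semiprime :: "'a::ring_1 itself \<Rightarrow> bool" where
  "semiprime _ \<longleftrightarrow> (\<forall>I::'a set. two_sided_ideal I \<and> (\<forall>x\<in>I. \<forall>y\<in>I. x * y = 0) \<longrightarrow> I = {0})"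

definition left_ann :: "'a::ring_1 set \<Rightarrow> 'a set" where
  "left_ann X = {r. \<forall>x\<in>X. r * x = 0}"

definition acc_left_annihilators :: "'a::ring_1 itself \<Rightarrow> bool" where
  "acc_left_annihilators _ \<longleftrightarrow>
     \<not> (\<exists>f :: nat \<Rightarrow> 'a set. (\<forall>n. \<exists>X. f n = left_ann X) \<and> (\<forall>n. f n \<subset> f (Suc n)))"

text \<open>Finite left uniform dimension: no infinite direct sum of nonzero left ideals.\<close>
definition finite_left_uniform_dim :: "'a::ring_1 itself \<Rightarrow> bool" where
  "finite_left_uniform_dim _ \<longleftrightarrow>
     \<not> (\<exists>L :: nat \<Rightarrow> 'a set. (\<forall>n. left_ideal (L n) \<and> L n \<noteq> {0}) \<and>
          (\<forall>n (x :: nat \<Rightarrow> 'a). (\<forall>i<n. x i \<in> L i) \<and> (\<Sum>i<n. x i) = 0 \<longrightarrow> (\<forall>i<n. x i = 0)))"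

definition left_goldie :: "'a::ring_1 itself \<Rightarrow> bool" where
  "left_goldie T \<longleftrightarrow> acc_left_annihilators T \<and> finite_left_uniform_dim T"

end

theory Submission
  imports Defs
begin

theorem theorem5p2:
  assumes "semiprime TYPE('a::ring_1)"
    and "left_goldie TYPE('a)"
    and "ore_set (S :: 'a set)"
  shows "regular_elems \<inter> ass S = {}"
proof (rule ccontr)
  assume "regular_elems \<inter> ass S \<noteq> {}"
  then obtain c where creg: "c \<in> regular_elems" and "c \<in> ass S" by blast
  then obtain s t where sS: "s \<in> S" and tS: "t \<in> S" and sct: "s * c * t = 0"
    unfolding ass_def by blast
  have mult: "multiplicative_set S" using assms(3) unfolding ore_set_def by blast
  have powS: "t ^ n \<in> S" for n
  proof (induction n)
    case 0 then show ?case using mult unfolding multiplicative_set_def by simp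
  next
    case (Suc n) then show ?case using mult tS unfolding multiplicative_set_def by simp
  qed
  define f where "f n = left_ann {t ^ n}" for n
  have acc: "acc_left_annihilators TYPE('a)" using assms(2) unfolding left_goldie_def by blast
  have sub: "f n \<subseteq> f (Suc n)" for n
    unfolding f_def left_ann_def by (auto simp: power_Suc2 mult.assoc[symmetric] simp del: power_Suc)
  have "\<exists>n. f n = f (Suc n)"
  proof (rule ccontr)
    assume "\<not> (\<exists>n. f n = f (Suc n))"
    then have "\<forall>n. f n \<subset> f (Suc n)" using sub by blast
    moreover have "\<forall>n. \<exists>X. f n = left_ann X" unfolding f_def by blast
    ultimately show False using acc unfolding acc_left_annihilators_def by blast
  qed
  then obtain n where eq: "f n = f (Suc n)" by blast
  define a where "a = s * c"
  have at: "a * t = 0" using sct a_def by simp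
  obtain s' r' where s'S: "s' \<in> S" and ore: "s' * a = r' * t ^ n"
    using assms(3) powS[of n] unfolding ore_set_def by blast
  have "r' * t ^ Suc n = 0"
  proof -
    have "r' * t ^ Suc n = r' * t ^ n * t" by (simp add: power_commutes mult.assoc)
    also have "\<dots> = s' * (a * t)" using ore by (simp add: mult.assoc[symmetric])
    finally show ?thesis using at by simp
  qed
  then have "r' \<in> f (Suc n)" unfolding f_def left_ann_def by simp
  then have "r' \<in> f n" using eq by simp
  then have "r' * t ^ n = 0" unfolding f_def left_ann_def by simp
  then have "(s' * s) * c = 0" using ore a_def by (simp add: mult.assoc)
  then have "s' * s = 0" using creg unfolding regular_elems_def by blast
  moreover have "s' * s \<in> S" using mult s'S sS unfolding multiplicative_set_def by blast
  ultimately show False using mult unfolding multiplicative_set_def by simp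
qed

end
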